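(* Let $G$ be a graph whose $\operatorname{IR}$-graph $H=G(\operatorname{IR})$ is connected. Let $X=\{x_1,\dots,x_r\}$ be an $\operatorname{IR}(G)$-set such that exactly three vertices $x_1,x_2,x_3$ have positive degree in $G[X]$. For $i=1,2,3$ let $x_i'\in\operatorname{EPN}(x_i,X)$, and let $X'=(X-\{x_1,x_2,x_3\})\cup\{x_1',x_2',x_3'\}$. If $d_H(X,X')=3$, then $H$ contains an induced $4$-cycle, or $H$ contains an induced subgraph isomorphic to the double star $S(2,2)$ in which $X$ and $X'$ are leaves at distance $3$ from each other (antipodal leaves).
   Context: All graphs are finite and simple. For $G=(V,E)$, $D\subseteq V$, $v\in D$: $\operatorname{PN}(v,D)=N[v]-N[D-\{v\}]$ and $\operatorname{EPN}(v,D)=\operatorname{PN}(v,D)-D$. $D$ is irredundant if $\operatorname{PN}(v,D)\neq\varnothing$ for all $v\in D$; $\operatorname{IR}(G)$ is the maximum size of an irredundant set; an $\operatorname{IR}(G)$-set is an irredundant set of that size. $G(\operatorname{IR})$ has the $\operatorname{IR}(G)$-sets as vertices, with $D\sim D'$ iff there exist $u\in D$, $v\in D'$ with $uv\in E(G)$ and $D'=(D-\{u\})\cup\{v\}$. $d_H$ is distance in $H$. The double star $S(2,2)$ is the tree obtained by joining the centres of two copies of $K_{1,2}$ by an edge (6 vertices, diameter 3). *)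

theory Defs
  imports Main
begin

definition graph :: "'a set \<Rightarrow> ('a \<Rightarrow> 'a \<Rightarrow> bool) \<Rightarrow> bool" where
  "graph V adj \<longleftrightarrow> finite V \<and> (\<forall>u v. adj u v \<longrightarrow> u \<in> V \<and> v \<in> V)
     \<and> (\<forall>u v. adj u v \<longrightarrow> adj v u) \<and> (\<forall>v. \<not> adj v v)"

definition cnbhd :: "'a set \<Rightarrow> ('a \<Rightarrow> 'a \<Rightarrow> bool) \<Rightarrow> 'a \<Rightarrow> 'a set" where
  "cnbhd V adj v = {u \<in> V. u = v \<or> adj v u}"

definition cnbhd_set :: "'a set \<Rightarrow> ('a \<Rightarrow> 'a \<Rightarrow> bool) \<Rightarrow> 'a set \<Rightarrow> 'a set" where
  "cnbhd_set V adj S = (\<Union>v\<in>S. cnbhd V adj v)"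

definition PN :: "'a set \<Rightarrow> ('a \<Rightarrow> 'a \<Rightarrow> bool) \<Rightarrow> 'a \<Rightarrow> 'a set \<Rightarrow> 'a set" where
  "PN V adj v D = cnbhd V adj v - cnbhd_set V adj (D - {v})"

definition EPN :: "'a set \<Rightarrow> ('a \<Rightarrow> 'a \<Rightarrow> bool) \<Rightarrow> 'a \<Rightarrow> 'a set \<Rightarrow> 'a set" where
  "EPN V adj v D = PN V adj v D - D"

definition irredundant :: "'a set \<Rightarrow> ('a \<Rightarrow> 'a \<Rightarrow> bool) \<Rightarrow> 'a set \<Rightarrow> bool" where
  "irredundant V adj D \<longleftrightarrow> D \<subseteq> V \<and> (\<forall>v\<in>D. PN V adj v D \<noteq> {})"

definition IR :: "'a set \<Rightarrow> ('a \<Rightarrow> 'a \<Rightarrow> bool) \<Rightarrow> nat" where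
  "IR V adj = Max (card ` {D. irredundant V adj D})"

definition IR_set :: "'a set \<Rightarrow> ('a \<Rightarrow> 'a \<Rightarrow> bool) \<Rightarrow> 'a set \<Rightarrow> bool" where
  "IR_set V adj D \<longleftrightarrow> irredundant V adj D \<and> card D = IR V adj"

definition IR_graph_V :: "'a set \<Rightarrow> ('a \<Rightarrow> 'a \<Rightarrow> bool) \<Rightarrow> 'a set set" where
  "IR_graph_V V adj = {D. IR_set V adj D}"

definition IR_graph_adj :: "'a set \<Rightarrow> ('a \<Rightarrow> 'a \<Rightarrow> bool) \<Rightarrow> 'a set \<Rightarrow> 'a set \<Rightarrow> bool" where
  "IR_graph_adj V adj D D' \<longleftrightarrow> IR_set V adj D \<and> IR_set V adj D' \<and>
     (\<exists>u\<in>D. \<exists>v\<in>D'. adj u v \<and> D' = (D - {u}) \<union> {v})"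

fun walkn :: "'b set \<Rightarrow> ('b \<Rightarrow> 'b \<Rightarrow> bool) \<Rightarrow> nat \<Rightarrow> 'b \<Rightarrow> 'b \<Rightarrow> bool" where
  "walkn W a 0 x y = (x = y \<and> x \<in> W)"
| "walkn W a (Suc n) x y = (x \<in> W \<and> (\<exists>z\<in>W. a x z \<and> walkn W a n z y))"

definition connected_graph :: "'b set \<Rightarrow> ('b \<Rightarrow> 'b \<Rightarrow> bool) \<Rightarrow> bool" where
  "connected_graph W a \<longleftrightarrow> (\<forall>x\<in>W. \<forall>y\<in>W. \<exists>n. walkn W a n x y)"

definition gdist :: "'b set \<Rightarrow> ('b \<Rightarrow> 'b \<Rightarrow> bool) \<Rightarrow> 'b \<Rightarrow> 'b \<Rightarrow> nat" where
  "gdist W a x y = (LEAST n. walkn W a n x y)"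

definition has_induced_C4 :: "'b set \<Rightarrow> ('b \<Rightarrow> 'b \<Rightarrow> bool) \<Rightarrow> bool" where
  "has_induced_C4 W a \<longleftrightarrow> (\<exists>p q r s. p \<in> W \<and> q \<in> W \<and> r \<in> W \<and> s \<in> W \<and>
     distinct [p, q, r, s] \<and> a p q \<and> a q r \<and> a r s \<and> a s p \<and> \<not> a p r \<and> \<not> a q s)"

definition has_induced_S22_antipodal :: "'b set \<Rightarrow> ('b \<Rightarrow> 'b \<Rightarrow> bool) \<Rightarrow> 'b \<Rightarrow> 'b \<Rightarrow> bool" where
  "has_induced_S22_antipodal W a x y \<longleftrightarrow> (\<exists>c1 c2 l1 l2.
     x \<in> W \<and> y \<in> W \<and> c1 \<in> W \<and> c2 \<in> W \<and> l1 \<in> W \<and> l2 \<in> W \<and>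
     distinct [x, l1, c1, c2, l2, y] \<and>
     (\<forall>u\<in>{x, l1, c1, c2, l2, y}. \<forall>v\<in>{x, l1, c1, c2, l2, y}.
        a u v \<longleftrightarrow> {u, v} \<in> {{x, c1}, {l1, c1}, {c1, c2}, {c2, l2}, {c2, y}}))"

end

theory Submission
  imports Defs
begin


lemma g_sym: "graph V adj \<Longrightarrow> adj u v \<Longrightarrow> adj v u"
  by (auto simp: graph_def)
lemma g_V: "graph V adj \<Longrightarrow> adj u v \<Longrightarrow> u \<in> V \<and> v \<in> V"
  by (auto simp: graph_def)
lemma g_irr: "graph V adj \<Longrightarrow> \<not> adj v v"
  by (auto simp: graph_def)

lemma PN_iff: "y \<in> PN V adj v D \<longleftrightarrow> y \<in> V \<and> (y = v \<or> adj v y) \<and> (\<forall>t\<in>D. t \<noteq> v \<longrightarrow> y \<noteq> t \<and> \<not> adj t y)"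
  by (auto simp: PN_def cnbhd_def cnbhd_set_def)

lemma EPN_iff: "y \<in> EPN V adj v D \<longleftrightarrow> y \<in> V \<and> (y = v \<or> adj v y) \<and> (\<forall>t\<in>D. t \<noteq> v \<longrightarrow> y \<noteq> t \<and> \<not> adj t y) \<and> y \<notin> D"
  by (auto simp: EPN_def PN_iff)

definition wfree :: "'a set \<Rightarrow> ('a \<Rightarrow> 'a \<Rightarrow> bool) \<Rightarrow> 'a \<Rightarrow> bool" where
  "wfree W adj p \<longleftrightarrow> (\<forall>w\<in>W. p \<noteq> w \<and> \<not> adj w p)"

lemma irr3:
  assumes G: "graph V adj" and WV: "W \<subseteq> V" and V: "p \<in> V" "q \<in> V" "r \<in> V"
    and isoW: "\<forall>w\<in>W. \<forall>w'\<in>W. \<not> adj w w'"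
    and wf: "wfree W adj p" "wfree W adj q" "wfree W adj r"
    and yp: "yp \<in> V" "yp = p \<or> adj p yp" "yp \<noteq> q" "\<not> adj q yp" "yp \<noteq> r" "\<not> adj r yp" "wfree W adj yp"
    and yq: "yq \<in> V" "yq = q \<or> adj q yq" "yq \<noteq> p" "\<not> adj p yq" "yq \<noteq> r" "\<not> adj r yq" "wfree W adj yq"
    and yr: "yr \<in> V" "yr = r \<or> adj r yr" "yr \<noteq> p" "\<not> adj p yr" "yr \<noteq> q" "\<not> adj q yr" "wfree W adj yr"
  shows "irredundant V adj (insert p (insert q (insert r W)))"
  unfolding irredundant_def
proof (intro conjI ballI)
  show "insert p (insert q (insert r W)) \<subseteq> V" using WV V by auto
next
  fix v assume v: "v \<in> insert p (insert q (insert r W))"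
  have sp: "\<not> adj w p" "\<not> adj w q" "\<not> adj w r" if "w \<in> W" for w
    using wf that unfolding wfree_def by auto
  show "PN V adj v (insert p (insert q (insert r W))) \<noteq> {}"
  proof (cases "v \<in> W")
    case True
    have "v \<in> PN V adj v (insert p (insert q (insert r W)))"
      unfolding PN_iff using True WV isoW wf G
      by (auto simp: wfree_def dest: g_sym)
    then show ?thesis by blast
  next
    case False
    then have "v = p \<or> v = q \<or> v = r" using v by auto
    then show ?thesis
    proof (elim disjE)
      assume "v = p"
      have "yp \<in> PN V adj v (insert p (insert q (insert r W)))"
        unfolding PN_iff using yp \<open>v = p\<close> by (auto simp: wfree_def)
      then show ?thesis by blast
    next
      assume "v = q"
      have "yq \<in> PN V adj v (insert p (insert q (insert r W)))"
        unfolding PN_iff using yq \<open>v = q\<close> by (auto simp: wfree_def)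
      then show ?thesis by blast
    next
      assume "v = r"
      have "yr \<in> PN V adj v (insert p (insert q (insert r W)))"
        unfolding PN_iff using yr \<open>v = r\<close> by (auto simp: wfree_def)
      then show ?thesis by blast
    qed
  qed
qed

lemma card3: "finite W \<Longrightarrow> p \<notin> W \<Longrightarrow> q \<notin> W \<Longrightarrow> r \<notin> W \<Longrightarrow> distinct [p,q,r] \<Longrightarrow>
  card (insert p (insert q (insert r W))) = card W + 3"
  by simp

lemma IR3:
  assumes "IR_set V adj (insert a (insert b (insert c W)))" "finite W"
    "a \<notin> W" "b \<notin> W" "c \<notin> W" "distinct [a,b,c]"
    "p \<notin> W" "q \<notin> W" "r \<notin> W" "distinct [p,q,r]"
    "irredundant V adj (insert p (insert q (insert r W)))"
  shows "IR_set V adj (insert p (insert q (insert r W)))"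
  using assms by (simp add: IR_set_def)

lemma Ha_intro: "IR_set V adj D \<Longrightarrow> IR_set V adj D' \<Longrightarrow> u \<in> D \<Longrightarrow> v \<in> D' \<Longrightarrow> adj u v \<Longrightarrow>
   D' = (D - {u}) \<union> {v} \<Longrightarrow> IR_graph_adj V adj D D'"
  unfolding IR_graph_adj_def by blast

lemma Ha_diff: "IR_graph_adj V adj D D' \<Longrightarrow> x \<in> D \<Longrightarrow> x \<notin> D' \<Longrightarrow> y \<in> D' \<Longrightarrow> y \<notin> D \<Longrightarrow> adj x y"
  unfolding IR_graph_adj_def by blast

lemma Ha_diff2: "IR_graph_adj V adj D D' \<Longrightarrow> x \<in> D \<Longrightarrow> x \<notin> D' \<Longrightarrow> x2 \<in> D \<Longrightarrow> x2 \<notin> D' \<Longrightarrow> x = x2"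
  unfolding IR_graph_adj_def by blast

lemma Ha_nadj1: "x \<in> D \<Longrightarrow> x \<notin> D' \<Longrightarrow> y \<in> D' \<Longrightarrow> y \<notin> D \<Longrightarrow> \<not> adj x y \<Longrightarrow> \<not> IR_graph_adj V adj D D'"
  using Ha_diff by metis

lemma Ha_nadj2: "x \<in> D \<Longrightarrow> x \<notin> D' \<Longrightarrow> x2 \<in> D \<Longrightarrow> x2 \<notin> D' \<Longrightarrow> x \<noteq> x2 \<Longrightarrow> \<not> IR_graph_adj V adj D D'"
  using Ha_diff2 by metis

lemma Ha_irr: "graph V adj \<Longrightarrow> \<not> IR_graph_adj V adj D D"
  unfolding IR_graph_adj_def using g_irr by fastforce

lemma IR_finite: "graph V adj \<Longrightarrow> IR_set V adj D \<Longrightarrow> finite D"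
  unfolding IR_set_def irredundant_def graph_def using finite_subset by blast

lemma Ha_sym:
  assumes G: "graph V adj" and H: "IR_graph_adj V adj D D'"
  shows "IR_graph_adj V adj D' D"
proof -
  obtain u v where u: "u \<in> D" and v: "v \<in> D'" and uv: "adj u v" and D': "D' = (D - {u}) \<union> {v}"
    and I: "IR_set V adj D" "IR_set V adj D'"
    using H unfolding IR_graph_adj_def by blast
  have fin: "finite D" using IR_finite[OF G I(1)] .
  have "v \<noteq> u" using uv g_irr[OF G] by blast
  have "v \<notin> D"
  proof
    assume "v \<in> D"
    then have "D' = D - {u}" using D' \<open>v \<noteq> u\<close> by blast
    then have "card D' < card D" using fin u by (metis card_Diff1_less)
    then show False using I unfolding IR_set_def by simp
  qed
  then have "D = (D' - {v}) \<union> {u}" using D' u \<open>v \<noteq> u\<close> by blast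
  moreover have "u \<in> D" "adj v u" using u g_sym[OF G uv] by auto
  ultimately show ?thesis unfolding IR_graph_adj_def using I v by blast
qed

lemma set_neq: "x \<in> A \<Longrightarrow> x \<notin> B \<Longrightarrow> A \<noteq> B" by blast
lemma set_neq': "x \<notin> A \<Longrightarrow> x \<in> B \<Longrightarrow> A \<noteq> B" by blast



lemma C4_intro:
  assumes "p \<in> IR_graph_V V adj" "q \<in> IR_graph_V V adj" "r \<in> IR_graph_V V adj" "s \<in> IR_graph_V V adj"
    "distinct [p,q,r,s]"
    "IR_graph_adj V adj p q" "IR_graph_adj V adj q r" "IR_graph_adj V adj r s" "IR_graph_adj V adj s p"
    "\<not> IR_graph_adj V adj p r" "\<not> IR_graph_adj V adj q s"
  shows "has_induced_C4 (IR_graph_V V adj) (IR_graph_adj V adj)"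
  unfolding has_induced_C4_def using assms by blast

lemma S22_intro:
  assumes G: "graph V adj"
    and M: "x \<in> IR_graph_V V adj" "y \<in> IR_graph_V V adj" "c1 \<in> IR_graph_V V adj" "c2 \<in> IR_graph_V V adj"
       "l1 \<in> IR_graph_V V adj" "l2 \<in> IR_graph_V V adj"
    and D: "distinct [x, l1, c1, c2, l2, y]"
    and E: "IR_graph_adj V adj x c1" "IR_graph_adj V adj l1 c1" "IR_graph_adj V adj c1 c2"
       "IR_graph_adj V adj c2 l2" "IR_graph_adj V adj c2 y"
    and N: "\<not> IR_graph_adj V adj x l1" "\<not> IR_graph_adj V adj x c2" "\<not> IR_graph_adj V adj x l2"
       "\<not> IR_graph_adj V adj x y" "\<not> IR_graph_adj V adj l1 c2" "\<not> IR_graph_adj V adj l1 l2"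
       "\<not> IR_graph_adj V adj l1 y" "\<not> IR_graph_adj V adj c1 l2" "\<not> IR_graph_adj V adj c1 y"
       "\<not> IR_graph_adj V adj l2 y"
  shows "has_induced_S22_antipodal (IR_graph_V V adj) (IR_graph_adj V adj) x y"
proof -
  let ?H = "IR_graph_adj V adj"
  have sym: "?H u v \<Longrightarrow> ?H v u" for u v using Ha_sym[OF G] by blast
  have irr: "\<not> ?H u u" for u using Ha_irr[OF G] by blast
  have E2: "?H c1 x" "?H c1 l1" "?H c2 c1" "?H l2 c2" "?H y c2" using E sym by auto
  have N2: "\<not> ?H l1 x" "\<not> ?H c2 x" "\<not> ?H l2 x" "\<not> ?H y x" "\<not> ?H c2 l1" "\<not> ?H l2 l1"
     "\<not> ?H y l1" "\<not> ?H l2 c1" "\<not> ?H y c1" "\<not> ?H y l2" using N sym by blast+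
  have neq: "x \<noteq> l1" "x \<noteq> c1" "x \<noteq> c2" "x \<noteq> l2" "x \<noteq> y" "l1 \<noteq> x" "l1 \<noteq> c1" "l1 \<noteq> c2" "l1 \<noteq> l2" "l1 \<noteq> y" "c1 \<noteq> x" "c1 \<noteq> l1" "c1 \<noteq> c2" "c1 \<noteq> l2" "c1 \<noteq> y" "c2 \<noteq> x" "c2 \<noteq> l1" "c2 \<noteq> c1" "c2 \<noteq> l2" "c2 \<noteq> y" "l2 \<noteq> x" "l2 \<noteq> l1" "l2 \<noteq> c1" "l2 \<noteq> c2" "l2 \<noteq> y" "y \<noteq> x" "y \<noteq> l1" "y \<noteq> c1" "y \<noteq> c2" "y \<noteq> l2" using D by auto
  have "\<forall>u\<in>{x, l1, c1, c2, l2, y}. \<forall>v\<in>{x, l1, c1, c2, l2, y}.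
        ?H u v \<longleftrightarrow> {u, v} \<in> {{x, c1}, {l1, c1}, {c1, c2}, {c2, l2}, {c2, y}}"
    apply (simp only: Ball_def insert_iff empty_iff simp_thms)
    apply (intro allI impI)
    apply (elim disjE)
    using D E E2 N N2 irr neq by (simp_all add: doubleton_eq_iff)
  then show ?thesis unfolding has_induced_S22_antipodal_def using M D by blast
qed



lemma core:
  assumes G: "graph V adj"
    and IRX: "IR_set V adj X"
    and abc: "a \<in> X" "b \<in> X" "c \<in> X" "distinct [a,b,c]"
    and iso: "\<forall>w\<in>X - {a,b,c}. \<forall>y\<in>X. \<not> adj w y"
    and pa: "a' \<in> EPN V adj a X" and pb: "b' \<in> EPN V adj b X" and pc: "c' \<in> EPN V adj c X"
    and IRa: "IR_set V adj (insert a' (insert b (insert c (X - {a,b,c}))))"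
    and IRab: "IR_set V adj (insert a' (insert b' (insert c (X - {a,b,c}))))"
    and IRp: "IR_set V adj (insert a' (insert b' (insert c' (X - {a,b,c}))))"
  shows "has_induced_C4 (IR_graph_V V adj) (IR_graph_adj V adj) \<or>
         has_induced_S22_antipodal (IR_graph_V V adj) (IR_graph_adj V adj) X
            (insert a' (insert b' (insert c' (X - {a,b,c}))))"
proof -
  define W where "W = X - {a,b,c}"
  have XW: "X = insert a (insert b (insert c W))" using abc unfolding W_def by auto
  have XV: "X \<subseteq> V" using IRX unfolding IR_set_def irredundant_def by blast
  have finX: "finite X" using IR_finite[OF G IRX] .
  have finW: "finite W" using finX unfolding W_def by simp
  have WV: "W \<subseteq> V" using XV unfolding W_def by blast
  have nW: "a \<notin> W" "b \<notin> W" "c \<notin> W" unfolding W_def by auto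
  have isoW: "\<forall>w\<in>W. \<forall>w'\<in>W. \<not> adj w w'" using iso unfolding W_def by blast
  have sym: "\<And>u v. adj u v \<Longrightarrow> adj v u" using g_sym[OF G] by blast
  have irr: "\<And>u. \<not> adj u u" using g_irr[OF G] by blast
  have VV: "a \<in> V" "b \<in> V" "c \<in> V" using abc XV by auto
  have pa': "a' \<in> V" "adj a a'" "a' \<notin> X" "\<And>t. t \<in> X \<Longrightarrow> t \<noteq> a \<Longrightarrow> a' \<noteq> t \<and> \<not> adj t a'"
    using pa abc unfolding EPN_iff by auto
  have pb': "b' \<in> V" "adj b b'" "b' \<notin> X" "\<And>t. t \<in> X \<Longrightarrow> t \<noteq> b \<Longrightarrow> b' \<noteq> t \<and> \<not> adj t b'"
    using pb abc unfolding EPN_iff by auto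
  have pc': "c' \<in> V" "adj c c'" "c' \<notin> X" "\<And>t. t \<in> X \<Longrightarrow> t \<noteq> c \<Longrightarrow> c' \<noteq> t \<and> \<not> adj t c'"
    using pc abc unfolding EPN_iff by auto
  have na1: "\<not> adj b a'" "\<not> adj c a'" "\<not> adj a b'" "\<not> adj c b'" "\<not> adj a c'" "\<not> adj b c'"
    using pa'(4)[of b] pa'(4)[of c] pb'(4)[of a] pb'(4)[of c] pc'(4)[of a] pc'(4)[of b] abc by auto
  have na2: "\<not> adj a' b" "\<not> adj a' c" "\<not> adj b' a" "\<not> adj b' c" "\<not> adj c' a" "\<not> adj c' b"
    using na1 sym[of "a'" b] sym[of "a'" c] sym[of "b'" a] sym[of "b'" c] sym[of "c'" a] sym[of "c'" b] by auto
  note na = na1 na2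
  have ea: "adj a' a" "adj b' b" "adj c' c" using pa'(2) pb'(2) pc'(2) sym by auto
  have nX: "a' \<notin> X" "b' \<notin> X" "c' \<notin> X" using pa' pb' pc' by auto
  have nX': "a' \<notin> W" "b' \<notin> W" "c' \<notin> W" "a' \<noteq> a" "a' \<noteq> b" "a' \<noteq> c" "b' \<noteq> a" "b' \<noteq> b" "b' \<noteq> c"
     "c' \<noteq> a" "c' \<noteq> b" "c' \<noteq> c"
    using nX abc unfolding W_def by auto
  have dp: "a' \<noteq> b'" "a' \<noteq> c'" "b' \<noteq> c'"
    using pa'(2) pb'(2) pc'(2) na by auto
  have dabc: "a \<noteq> b" "a \<noteq> c" "b \<noteq> c" using abc by auto
  have wf: "wfree W adj a" "wfree W adj b" "wfree W adj c" "wfree W adj a'" "wfree W adj b'" "wfree W adj c'"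
    unfolding wfree_def W_def using iso abc pa'(4) pb'(4) pc'(4) by auto
  let ?HV = "IR_graph_V V adj" and ?H = "IR_graph_adj V adj"
  define Xa where "Xa = insert a' (insert b (insert c W))"
  define Xab where "Xab = insert a' (insert b' (insert c W))"
  define Xp where "Xp = insert a' (insert b' (insert c' W))"
  define Xb where "Xb = insert a (insert b' (insert c W))"
  define Xac where "Xac = insert a' (insert b (insert c' W))"
  have Xp_eq: "insert a' (insert b' (insert c' (X - {a,b,c}))) = Xp" unfolding Xp_def W_def ..
  have IRX': "IR_set V adj X" using IRX .
  have IRa': "IR_set V adj Xa" using IRa unfolding Xa_def W_def .
  have IRab': "IR_set V adj Xab" using IRab unfolding Xab_def W_def .
  have IRp': "IR_set V adj Xp" using IRp unfolding Xp_def W_def .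
  note F = dabc dp nX' nW na ea pa'(2) pb'(2) pc'(2) irr
  have HXXa: "?H X Xa"
    by (rule Ha_intro[OF IRX' IRa', of a a']) (use F in \<open>auto simp: XW Xa_def\<close>)
  have HXaXab: "?H Xa Xab"
    by (rule Ha_intro[OF IRa' IRab', of b b']) (use F in \<open>auto simp: Xa_def Xab_def\<close>)
  have HXabXp: "?H Xab Xp"
    by (rule Ha_intro[OF IRab' IRp', of c c']) (use F in \<open>auto simp: Xab_def Xp_def\<close>)
  have inHV: "X \<in> ?HV" "Xa \<in> ?HV" "Xab \<in> ?HV" "Xp \<in> ?HV"
    using IRX' IRa' IRab' IRp' unfolding IR_graph_V_def by auto
  show ?thesis
  proof (cases "IR_set V adj Xb")
    case True
    have "?H Xab Xb"
      by (rule Ha_intro[OF IRab' True, of a' a]) (use F in \<open>auto simp: Xab_def Xb_def\<close>)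
    moreover have "?H Xb X"
      by (rule Ha_intro[OF True IRX', of b' b]) (use F in \<open>auto simp: XW Xb_def\<close>)
    moreover have "\<not> ?H X Xab"
      by (rule Ha_nadj2[of a _ _ b]) (use F in \<open>auto simp: XW Xab_def\<close>)
    moreover have "\<not> ?H Xa Xb"
      by (rule Ha_nadj2[of a' _ _ b]) (use F in \<open>auto simp: Xa_def Xb_def\<close>)
    moreover have "distinct [X, Xa, Xab, Xb]"
    proof -
      have "X \<noteq> Xa" by (rule set_neq[of a]) (use F in \<open>auto simp: XW Xa_def\<close>)
      moreover have "X \<noteq> Xab" by (rule set_neq[of a]) (use F in \<open>auto simp: XW Xab_def\<close>)
      moreover have "X \<noteq> Xb" by (rule set_neq[of b]) (use F in \<open>auto simp: XW Xb_def\<close>)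
      moreover have "Xa \<noteq> Xab" by (rule set_neq[of b]) (use F in \<open>auto simp: Xa_def Xab_def\<close>)
      moreover have "Xa \<noteq> Xb" by (rule set_neq[of "a'"]) (use F in \<open>auto simp: Xa_def Xb_def\<close>)
      moreover have "Xab \<noteq> Xb" by (rule set_neq[of "a'"]) (use F in \<open>auto simp: Xab_def Xb_def\<close>)
      ultimately show ?thesis by simp
    qed
    moreover have "Xb \<in> ?HV" using True unfolding IR_graph_V_def by auto
    ultimately show ?thesis using HXXa HXaXab inHV C4_intro by metis
  next
    case nXb: False
    have ac: "adj a c"
    proof (rule ccontr)
      assume nac: "\<not> adj a c"
      have "irredundant V adj Xb" unfolding Xb_def
        by (rule irr3[where yp = a and yq = "b'" and yr = c])
           (use F nac sym[of c a] VV pb'(1) WV isoW wf G in auto)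
      then have "IR_set V adj Xb" unfolding Xb_def
        by (intro IR3[OF IRX'[unfolded XW]]) (use F finW in auto)
      then show False using nXb by blast
    qed
    show ?thesis
    proof (cases "IR_set V adj Xac")
      case True
      have "?H Xp Xac"
        by (rule Ha_intro[OF IRp' True, of b' b]) (use F in \<open>auto simp: Xp_def Xac_def\<close>)
      moreover have "?H Xac Xa"
        by (rule Ha_intro[OF True IRa', of c' c]) (use F in \<open>auto simp: Xa_def Xac_def\<close>)
      moreover have "\<not> ?H Xa Xp"
        by (rule Ha_nadj2[of b _ _ c]) (use F in \<open>auto simp: Xa_def Xp_def\<close>)
      moreover have "\<not> ?H Xab Xac"
        by (rule Ha_nadj2[of b' _ _ c]) (use F in \<open>auto simp: Xab_def Xac_def\<close>)
      moreover have "distinct [Xa, Xab, Xp, Xac]"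
      proof -
        have "Xa \<noteq> Xab" by (rule set_neq[of b]) (use F in \<open>auto simp: Xa_def Xab_def\<close>)
        moreover have "Xa \<noteq> Xp" by (rule set_neq[of b]) (use F in \<open>auto simp: Xa_def Xp_def\<close>)
        moreover have "Xa \<noteq> Xac" by (rule set_neq[of c]) (use F in \<open>auto simp: Xa_def Xac_def\<close>)
        moreover have "Xab \<noteq> Xp" by (rule set_neq[of c]) (use F in \<open>auto simp: Xab_def Xp_def\<close>)
        moreover have "Xab \<noteq> Xac" by (rule set_neq[of "b'"]) (use F in \<open>auto simp: Xab_def Xac_def\<close>)
        moreover have "Xp \<noteq> Xac" by (rule set_neq[of "b'"]) (use F in \<open>auto simp: Xp_def Xac_def\<close>)
        ultimately show ?thesis by simp
      qed
      moreover have "Xac \<in> ?HV" using True unfolding IR_graph_V_def by auto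
      ultimately show ?thesis using HXaXab HXabXp inHV C4_intro by metis
    next
      case nXac: False
      have ac': "adj a' c'"
      proof (rule ccontr)
        assume nac: "\<not> adj a' c'"
        have "irredundant V adj Xac" unfolding Xac_def
          by (rule irr3[where yp = "a'" and yq = b and yr = "c'"])
             (use F nac sym[of "c'" "a'"] VV pa'(1) pc'(1) WV isoW wf G in auto)
        then have "IR_set V adj Xac" unfolding Xac_def
          by (intro IR3[OF IRX'[unfolded XW]]) (use F finW in auto)
        then show False using nXac by blast
      qed
      have ca: "adj c a" "adj c' a'" using sym ac ac' by auto
      have IRX3: "IR_set V adj (insert a (insert b (insert c W)))" using IRX' unfolding XW .
      show ?thesis
      proof (cases "adj b c")
        case e2: False
        have ne2: "\<not> adj c b" using e2 sym by blast
        show ?thesis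
        proof (cases "adj a' b'")
          case p1: False
          have np1: "\<not> adj b' a'" using p1 sym by blast
          define l1 where "l1 = insert a' (insert b (insert a W))"
          define l2 where "l2 = insert c' (insert b' (insert c W))"
          have "irredundant V adj l1" unfolding l1_def
            by (rule irr3[where yp = "c'" and yq = "b'" and yr = c])
               (use F e2 p1 ac ac' VV pa'(1) pb'(1) pc'(1) WV isoW wf G in auto)
          then have IRl1: "IR_set V adj l1" unfolding l1_def
            by (intro IR3[OF IRX3]) (use F finW in auto)
          have "irredundant V adj l2" unfolding l2_def
            by (rule irr3[where yp = "a'" and yq = b and yr = a])
               (use F ne2 np1 ca VV pa'(1) pb'(1) pc'(1) WV isoW wf G in auto)
          then have IRl2: "IR_set V adj l2" unfolding l2_def
            by (intro IR3[OF IRX3]) (use F finW in auto)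
          have M: "l1 \<in> ?HV" "l2 \<in> ?HV" using IRl1 IRl2 unfolding IR_graph_V_def by auto
          have E: "?H l1 Xa"
            by (rule Ha_intro[OF IRl1 IRa', of a c]) (use F ac in \<open>auto simp: l1_def Xa_def\<close>)
          have E2: "?H Xab l2"
            by (rule Ha_intro[OF IRab' IRl2, of "a'" "c'"]) (use F ac' in \<open>auto simp: l2_def Xab_def\<close>)
          have N: "\<not> ?H X l1"
            by (rule Ha_nadj1[of c _ _ "a'"]) (use F in \<open>auto simp: XW l1_def\<close>)
          have N2: "\<not> ?H X Xab" "\<not> ?H X l2" "\<not> ?H X Xp" "\<not> ?H l1 Xab" "\<not> ?H l1 Xp"
            by (rule Ha_nadj2[of a _ _ b]; use F in \<open>auto simp: XW l1_def l2_def Xab_def Xp_def\<close>)+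
          have N3: "\<not> ?H l1 l2"
            by (rule Ha_nadj2[of "a'" _ _ a]) (use F in \<open>auto simp: l1_def l2_def\<close>)
          have N4: "\<not> ?H Xa l2"
            by (rule Ha_nadj2[of "a'" _ _ b]) (use F in \<open>auto simp: Xa_def l2_def\<close>)
          have N5: "\<not> ?H Xa Xp"
            by (rule Ha_nadj2[of b _ _ c]) (use F in \<open>auto simp: Xa_def Xp_def\<close>)
          have N6: "\<not> ?H l2 Xp"
            by (rule Ha_nadj1[of c _ _ "a'"]) (use F in \<open>auto simp: l2_def Xp_def\<close>)
          have D: "distinct [X, l1, Xa, Xab, l2, Xp]"
          proof -
            have "X \<noteq> l1" by (rule set_neq[of c]) (use F in \<open>auto simp: XW l1_def\<close>)
            moreover have "X \<noteq> Xa" "X \<noteq> Xab" "X \<noteq> l2" "X \<noteq> Xp"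
              by (rule set_neq[of a]; use F in \<open>auto simp: XW Xa_def Xab_def l2_def Xp_def\<close>)+
            moreover have "l1 \<noteq> Xa" "l1 \<noteq> Xab" "l1 \<noteq> l2" "l1 \<noteq> Xp"
              by (rule set_neq[of a]; use F in \<open>auto simp: l1_def Xa_def Xab_def l2_def Xp_def\<close>)+
            moreover have "Xa \<noteq> Xab" "Xa \<noteq> l2" "Xa \<noteq> Xp"
              by (rule set_neq[of b]; use F in \<open>auto simp: Xa_def Xab_def l2_def Xp_def\<close>)+
            moreover have "Xab \<noteq> l2" by (rule set_neq[of "a'"]) (use F in \<open>auto simp: Xab_def l2_def\<close>)
            moreover have "Xab \<noteq> Xp" "l2 \<noteq> Xp"
              by (rule set_neq[of c]; use F in \<open>auto simp: Xab_def l2_def Xp_def\<close>)+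
            ultimately show ?thesis by simp
          qed
          have "has_induced_S22_antipodal ?HV ?H X Xp"
            by (rule S22_intro[OF G inHV(1) inHV(4) inHV(2) inHV(3) M(1) M(2) D HXXa E HXaXab E2 HXabXp
                  N N2(1) N2(2) N2(3) N2(4) N3 N2(5) N4 N5 N6])
          then show ?thesis unfolding Xp_eq by blast
        next
          case p1: True
          obtain z where z: "z \<in> PN V adj a' Xab"
            using IRab' unfolding IR_set_def irredundant_def Xab_def by blast
          have zf: "z \<in> V" "z = a' \<or> adj a' z" "\<And>t. t \<in> Xab \<Longrightarrow> t \<noteq> a' \<Longrightarrow> z \<noteq> t \<and> \<not> adj t z"
            using z unfolding PN_iff by auto
          have z1: "z \<noteq> b'" "\<not> adj b' z" "z \<noteq> c" "\<not> adj c z"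
            using zf(3)[of "b'"] zf(3)[of c] F by (auto simp: Xab_def)
          have wfz: "wfree W adj z" unfolding wfree_def using zf(3) nX' by (auto simp: Xab_def)
          have zW: "z \<notin> W" using wfz unfolding wfree_def by blast
          have az: "adj a' z" using zf(2) z1 p1 sym by blast
          have z2: "adj z a'" "\<not> adj z b'" "\<not> adj z c" "z \<noteq> b" "z \<noteq> a'"
            using az z1 sym na irr by blast+
          define Y1 where "Y1 = insert z (insert b (insert c W))"
          define Y2 where "Y2 = insert z (insert b' (insert c W))"
          have "irredundant V adj Y2" unfolding Y2_def
            by (rule irr3[where yp = z and yq = "b'" and yr = c])
               (use F z1 z2 zf(1) wfz VV pa'(1) pb'(1) pc'(1) WV isoW wf G in auto)
          then have IRY2: "IR_set V adj Y2" unfolding Y2_def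
            by (intro IR3[OF IRX3]) (use F z1 z2 zW finW in auto)
          have "irredundant V adj Y1" unfolding Y1_def
            by (rule irr3[where yp = "a'" and yq = "b'" and yr = c])
               (use F z1 z2 zf(1) e2 wfz VV pa'(1) pb'(1) pc'(1) WV isoW wf G in auto)
          then have IRY1: "IR_set V adj Y1" unfolding Y1_def
            by (intro IR3[OF IRX3]) (use F z1 z2 zW finW in auto)
          have M: "Y1 \<in> ?HV" "Y2 \<in> ?HV" using IRY1 IRY2 unfolding IR_graph_V_def by auto
          have E1: "?H Xab Y2"
            by (rule Ha_intro[OF IRab' IRY2, of "a'" z]) (use F z1 z2 zW az in \<open>auto simp: Xab_def Y2_def\<close>)
          have E2: "?H Y2 Y1"
            by (rule Ha_intro[OF IRY2 IRY1, of "b'" b]) (use F z1 z2 zW in \<open>auto simp: Y1_def Y2_def\<close>)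
          have E3: "?H Y1 Xa"
            by (rule Ha_intro[OF IRY1 IRa', of z "a'"]) (use F z1 z2 zW in \<open>auto simp: Y1_def Xa_def\<close>)
          have N1: "\<not> ?H Xa Y2"
            by (rule Ha_nadj2[of "a'" _ _ b]) (use F z1 z2 zW in \<open>auto simp: Xa_def Y2_def\<close>)
          have N2: "\<not> ?H Xab Y1"
            by (rule Ha_nadj2[of "a'" _ _ "b'"]) (use F z1 z2 zW in \<open>auto simp: Xab_def Y1_def\<close>)
          have D: "distinct [Xa, Xab, Y2, Y1]"
          proof -
            have "Xa \<noteq> Xab" by (rule set_neq[of b]) (use F in \<open>auto simp: Xa_def Xab_def\<close>)
            moreover have "Xa \<noteq> Y2" "Xa \<noteq> Y1" "Xab \<noteq> Y2" "Xab \<noteq> Y1"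
              by (rule set_neq[of "a'"]; use F z1 z2 zW in \<open>auto simp: Xa_def Xab_def Y1_def Y2_def\<close>)+
            moreover have "Y2 \<noteq> Y1" by (rule set_neq[of "b'"]) (use F z1 z2 zW in \<open>auto simp: Y1_def Y2_def\<close>)
            ultimately show ?thesis by simp
          qed
          show ?thesis using C4_intro[OF inHV(2) inHV(3) M(2) M(1) D HXaXab E1 E2 E3 N1 N2] by blast
        qed
      next
        case e2: True
        have e2s: "adj c b" using e2 sym by blast
        obtain z where z: "z \<in> PN V adj c Xa"
          using IRa' unfolding IR_set_def irredundant_def Xa_def by blast
        have zf: "z \<in> V" "z = c \<or> adj c z" "\<And>t. t \<in> Xa \<Longrightarrow> t \<noteq> c \<Longrightarrow> z \<noteq> t \<and> \<not> adj t z"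
          using z unfolding PN_iff by auto
        have z1: "z \<noteq> b" "\<not> adj b z" "z \<noteq> a'" "\<not> adj a' z"
          using zf(3)[of b] zf(3)[of "a'"] F by (auto simp: Xa_def)
        have wfz: "wfree W adj z" unfolding wfree_def using zf(3) nW by (auto simp: Xa_def)
        have zW: "z \<notin> W" using wfz unfolding wfree_def by blast
        have cz: "adj c z" using zf(2) z1 e2 by blast
        have z2: "adj z c" "\<not> adj z b" "\<not> adj z a'" "z \<noteq> c" "z \<noteq> b'" "z \<noteq> a" "z \<noteq> c'"
          using cz z1 sym irr F ac' by blast+
        define Y1 where "Y1 = insert a' (insert b (insert z W))"
        have "irredundant V adj Y1" unfolding Y1_def
          by (rule irr3[where yp = "a'" and yq = b and yr = z])
             (use F z1 z2 zf(1) wfz VV pa'(1) pb'(1) pc'(1) WV isoW wf G in auto)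
        then have IRY1: "IR_set V adj Y1" unfolding Y1_def
          by (intro IR3[OF IRX3]) (use F z1 z2 zW finW in auto)
        have EY1: "?H Y1 Xa"
          by (rule Ha_intro[OF IRY1 IRa', of z c]) (use F z1 z2 zW in \<open>auto simp: Y1_def Xa_def\<close>)
        show ?thesis
        proof (cases "adj a' b'")
          case p1: False
          have np1: "\<not> adj b' a'" using p1 sym by blast
          define Y2 where "Y2 = insert a' (insert b' (insert z W))"
          have "irredundant V adj Y2" unfolding Y2_def
            by (rule irr3[where yp = "a'" and yq = b and yr = c])
               (use F z1 z2 zf(1) np1 wfz VV pa'(1) pb'(1) pc'(1) WV isoW wf G in auto)
          then have IRY2: "IR_set V adj Y2" unfolding Y2_def
            by (intro IR3[OF IRX3]) (use F z1 z2 zW finW in auto)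
          have M: "Y1 \<in> ?HV" "Y2 \<in> ?HV" using IRY1 IRY2 unfolding IR_graph_V_def by auto
          have E1: "?H Xab Y2"
            by (rule Ha_intro[OF IRab' IRY2, of c z]) (use F z1 z2 zW cz in \<open>auto simp: Xab_def Y2_def\<close>)
          have E2: "?H Y2 Y1"
            by (rule Ha_intro[OF IRY2 IRY1, of "b'" b]) (use F z1 z2 zW in \<open>auto simp: Y1_def Y2_def\<close>)
          have N1: "\<not> ?H Xa Y2"
            by (rule Ha_nadj2[of b _ _ c]) (use F z1 z2 zW in \<open>auto simp: Xa_def Y2_def\<close>)
          have N2: "\<not> ?H Xab Y1"
            by (rule Ha_nadj2[of "b'" _ _ c]) (use F z1 z2 zW in \<open>auto simp: Xab_def Y1_def\<close>)
          have D: "distinct [Xa, Xab, Y2, Y1]"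
          proof -
            have "Xa \<noteq> Xab" "Xa \<noteq> Y2" by (rule set_neq[of b]; use F z1 z2 zW in \<open>auto simp: Xa_def Xab_def Y2_def\<close>)+
            moreover have "Xa \<noteq> Y1" "Xab \<noteq> Y2" by (rule set_neq[of c]; use F z1 z2 zW in \<open>auto simp: Xa_def Xab_def Y1_def Y2_def\<close>)+
            moreover have "Xab \<noteq> Y1" "Y2 \<noteq> Y1" by (rule set_neq[of "b'"]; use F z1 z2 zW in \<open>auto simp: Xab_def Y1_def Y2_def\<close>)+
            ultimately show ?thesis by simp
          qed
          show ?thesis using C4_intro[OF inHV(2) inHV(3) M(2) M(1) D HXaXab E1 E2 EY1 N1 N2] by blast
        next
          case p1: True
          obtain u where u: "u \<in> PN V adj a' Xab"
            using IRab' unfolding IR_set_def irredundant_def Xab_def by blast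
          have uf: "u \<in> V" "u = a' \<or> adj a' u" "\<And>t. t \<in> Xab \<Longrightarrow> t \<noteq> a' \<Longrightarrow> u \<noteq> t \<and> \<not> adj t u"
            using u unfolding PN_iff by auto
          have u1: "u \<noteq> b'" "\<not> adj b' u" "u \<noteq> c" "\<not> adj c u"
            using uf(3)[of "b'"] uf(3)[of c] F by (auto simp: Xab_def)
          have wfu: "wfree W adj u" unfolding wfree_def using uf(3) nX' by (auto simp: Xab_def)
          have uW: "u \<notin> W" using wfu unfolding wfree_def by blast
          have au: "adj a' u" using uf(2) u1 p1 sym by blast
          have u2: "adj u a'" "\<not> adj u b'" "\<not> adj u c" "u \<noteq> b" "u \<noteq> a'" "u \<noteq> a" "u \<noteq> c'"
            using au u1 sym na irr ca F by blast+
          have zu: "z \<noteq> u" using cz u1 by blast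
          define l2 where "l2 = insert u (insert b' (insert c W))"
          have "irredundant V adj l2" unfolding l2_def
            by (rule irr3[where yp = u and yq = "b'" and yr = c])
               (use F u1 u2 uf(1) wfu VV pa'(1) pb'(1) pc'(1) WV isoW wf G in auto)
          then have IRl2: "IR_set V adj l2" unfolding l2_def
            by (intro IR3[OF IRX3]) (use F u1 u2 uW finW in auto)
          have M: "Y1 \<in> ?HV" "l2 \<in> ?HV" using IRY1 IRl2 unfolding IR_graph_V_def by auto
          have E2: "?H Xab l2"
            by (rule Ha_intro[OF IRab' IRl2, of "a'" u]) (use F u1 u2 uW au in \<open>auto simp: Xab_def l2_def\<close>)
          have N: "\<not> ?H X Y1"
            by (rule Ha_nadj2[of a _ _ c]) (use F z1 z2 zW in \<open>auto simp: XW Y1_def\<close>)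
          have N2: "\<not> ?H X Xab" "\<not> ?H X l2" "\<not> ?H X Xp"
            by (rule Ha_nadj2[of a _ _ b]; use F u1 u2 uW in \<open>auto simp: XW l2_def Xab_def Xp_def\<close>)+
          have N2': "\<not> ?H Y1 Xab" "\<not> ?H Y1 Xp"
            by (rule Ha_nadj2[of b _ _ z]; use F z1 z2 zW in \<open>auto simp: Y1_def Xab_def Xp_def\<close>)+
          have N3: "\<not> ?H Y1 l2" "\<not> ?H Xa l2"
            by (rule Ha_nadj2[of "a'" _ _ b]; use F z1 z2 zW u1 u2 uW in \<open>auto simp: Y1_def Xa_def l2_def\<close>)+
          have N5: "\<not> ?H Xa Xp"
            by (rule Ha_nadj2[of b _ _ c]) (use F in \<open>auto simp: Xa_def Xp_def\<close>)
          have N6: "\<not> ?H l2 Xp"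
            by (rule Ha_nadj2[of u _ _ c]) (use F u1 u2 uW in \<open>auto simp: l2_def Xp_def\<close>)
          have D: "distinct [X, Y1, Xa, Xab, l2, Xp]"
          proof -
            have "X \<noteq> Y1" "X \<noteq> Xa" "X \<noteq> Xab" "X \<noteq> l2" "X \<noteq> Xp"
              by (rule set_neq[of a]; use F z1 z2 zW u1 u2 uW in \<open>auto simp: XW Y1_def Xa_def Xab_def l2_def Xp_def\<close>)+
            moreover have "Y1 \<noteq> Xa" by (rule set_neq'[of c]) (use F z1 z2 zW in \<open>auto simp: Y1_def Xa_def\<close>)
            moreover have "Y1 \<noteq> Xab" "Y1 \<noteq> Xp"
              by (rule set_neq[of b]; use F z1 z2 zW in \<open>auto simp: Y1_def Xab_def Xp_def\<close>)+
            moreover have "Y1 \<noteq> l2" "Xa \<noteq> l2" "Xab \<noteq> l2"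
              by (rule set_neq[of "a'"]; use F z1 z2 zW u1 u2 uW in \<open>auto simp: Y1_def Xa_def Xab_def l2_def\<close>)+
            moreover have "Xa \<noteq> Xab" "Xa \<noteq> Xp"
              by (rule set_neq[of b]; use F in \<open>auto simp: Xa_def Xab_def Xp_def\<close>)+
            moreover have "Xab \<noteq> Xp" "l2 \<noteq> Xp"
              by (rule set_neq[of c]; use F u1 u2 uW in \<open>auto simp: Xab_def l2_def Xp_def\<close>)+
            ultimately show ?thesis by simp
          qed
          have "has_induced_S22_antipodal ?HV ?H X Xp"
            by (rule S22_intro[OF G inHV(1) inHV(4) inHV(2) inHV(3) M(1) M(2) D HXXa EY1 HXaXab E2 HXabXp
                  N N2(1) N2(2) N2(3) N2'(1) N3(1) N2'(2) N3(2) N5 N6])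
          then show ?thesis unfolding Xp_eq by blast
        qed
      qed
    qed
  qed
qed



lemma card3_distinct: "card {u1, u2, u3} = 3 \<Longrightarrow> distinct [u1, u2, u3]"
  by (auto simp: card_insert_if split: if_splits)

theorem lemma5p1:
  fixes V :: "'a set" and adj :: "'a \<Rightarrow> 'a \<Rightarrow> bool"
    and X :: "'a set" and x1 x2 x3 x1' x2' x3' :: 'a
  assumes "graph V adj"
    and "connected_graph (IR_graph_V V adj) (IR_graph_adj V adj)"
    and "IR_set V adj X"
    and "x1 \<in> X" "x2 \<in> X" "x3 \<in> X" "distinct [x1, x2, x3]"
    and "{x \<in> X. \<exists>y\<in>X. adj x y} = {x1, x2, x3}"
    and "x1' \<in> EPN V adj x1 X" "x2' \<in> EPN V adj x2 X" "x3' \<in> EPN V adj x3 X"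
    and "X' = (X - {x1, x2, x3}) \<union> {x1', x2', x3'}"
    and "X' \<in> IR_graph_V V adj"
    and "gdist (IR_graph_V V adj) (IR_graph_adj V adj) X X' = 3"
  shows "has_induced_C4 (IR_graph_V V adj) (IR_graph_adj V adj)
       \<or> has_induced_S22_antipodal (IR_graph_V V adj) (IR_graph_adj V adj) X X'"
proof -
  note G = assms(1) and conn = assms(2) and IRX = assms(3) and xs = assms(4-7)
    and deg = assms(8) and ep = assms(9-11) and X'def = assms(12) and X'HV = assms(13)
    and dist = assms(14)
  let ?HV = "IR_graph_V V adj" and ?H = "IR_graph_adj V adj"
  have XHV: "X \<in> ?HV" using IRX unfolding IR_graph_V_def by simp
  have "\<exists>n. walkn ?HV ?H n X X'" using conn XHV X'HV unfolding connected_graph_def by blast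
  then have "walkn ?HV ?H (gdist ?HV ?H X X') X X'" unfolding gdist_def by (rule LeastI_ex)
  then have "walkn ?HV ?H 3 X X'" using dist by simp
  then obtain D1 D2 where D: "D1 \<in> ?HV" "D2 \<in> ?HV" "?H X D1" "?H D1 D2" "?H D2 X'"
    by (auto simp: numeral_3_eq_3)
  obtain u1 v1 where uv1: "u1 \<in> X" "adj u1 v1" "D1 = (X - {u1}) \<union> {v1}"
    using D(3) unfolding IR_graph_adj_def by blast
  obtain u2 v2 where uv2: "u2 \<in> D1" "adj u2 v2" "D2 = (D1 - {u2}) \<union> {v2}"
    using D(4) unfolding IR_graph_adj_def by blast
  obtain u3 v3 where uv3: "u3 \<in> D2" "adj u3 v3" "X' = (D2 - {u3}) \<union> {v3}"
    using D(5) unfolding IR_graph_adj_def by blast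
  have e1: "x1' \<in> V" "adj x1 x1'" "x1' \<notin> X" "\<And>t. t \<in> X \<Longrightarrow> t \<noteq> x1 \<Longrightarrow> x1' \<noteq> t \<and> \<not> adj t x1'"
    using ep(1) xs unfolding EPN_iff by auto
  have e2: "x2' \<in> V" "adj x2 x2'" "x2' \<notin> X" "\<And>t. t \<in> X \<Longrightarrow> t \<noteq> x2 \<Longrightarrow> x2' \<noteq> t \<and> \<not> adj t x2'"
    using ep(2) xs unfolding EPN_iff by auto
  have e3: "x3' \<in> V" "adj x3 x3'" "x3' \<notin> X" "\<And>t. t \<in> X \<Longrightarrow> t \<noteq> x3 \<Longrightarrow> x3' \<noteq> t \<and> \<not> adj t x3'"
    using ep(3) xs unfolding EPN_iff by auto
  have vs: "{x1', x2', x3'} \<subseteq> {v1, v2, v3}"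
    using uv1(3) uv2(3) uv3(3) X'def e1(3) e2(3) e3(3) by blast
  have xnX': "x1 \<notin> X'" "x2 \<notin> X'" "x3 \<notin> X'"
    using X'def e1(3) e2(3) e3(3) xs by auto
  have us: "{x1, x2, x3} \<subseteq> {u1, u2, u3}"
    using uv1(3) uv2(3) uv3(3) xnX' xs by blast
  have c3: "card {x1, x2, x3} = 3" using xs(4) by simp
  have ueq: "{u1, u2, u3} = {x1, x2, x3}"
  proof -
    have "card {u1, u2, u3} \<le> 3" by (simp add: card_insert_le_m1)
    then show ?thesis using us c3 card_subset_eq[of "{u1,u2,u3}" "{x1,x2,x3}"]
      by (metis card_mono finite.emptyI finite.insertI le_antisym)
  qed
  have du: "distinct [u1, u2, u3]" using ueq c3 card3_distinct by metis
  have dx': "distinct [x1', x2', x3']" using e1 e2 e3 xs by auto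
  have veq: "{v1, v2, v3} = {x1', x2', x3'}"
  proof -
    have "card {v1, v2, v3} \<le> 3" by (simp add: card_insert_le_m1)
    moreover have "card {x1', x2', x3'} = 3" using dx' by simp
    ultimately show ?thesis using vs card_subset_eq[of "{v1,v2,v3}" "{x1',x2',x3'}"]
      by (metis card_mono finite.emptyI finite.insertI le_antisym)
  qed
  have epn: "v \<in> EPN V adj u X" if "u \<in> {x1,x2,x3}" "v \<in> {x1',x2',x3'}" "adj u v" for u v
    using that ep e1(4)[of x2] e1(4)[of x3] e2(4)[of x1] e2(4)[of x3] e3(4)[of x1] e3(4)[of x2] xs
    by auto
  have u2': "adj u2 v2" "adj u3 v3" using uv2 uv3 by auto
  have pa: "v1 \<in> EPN V adj u1 X" using epn[of u1 v1] ueq veq uv1(2) by auto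
  have pb: "v2 \<in> EPN V adj u2 X" using epn[of u2 v2] ueq veq uv2(2) by auto
  have pc: "v3 \<in> EPN V adj u3 X" using epn[of u3 v3] ueq veq uv3(2) by auto
  have vnX: "v1 \<notin> X" "v2 \<notin> X" "v3 \<notin> X" using veq e1(3) e2(3) e3(3) by auto
  have uX: "u1 \<in> X" "u2 \<in> X" "u3 \<in> X" using ueq xs by auto
  have iso: "\<forall>w\<in>X - {u1,u2,u3}. \<forall>y\<in>X. \<not> adj w y"
    using deg ueq by blast
  have D1eq: "D1 = insert v1 (insert u2 (insert u3 (X - {u1,u2,u3})))"
    using uv1(3) uX du vnX by auto
  have D2eq: "D2 = insert v1 (insert v2 (insert u3 (X - {u1,u2,u3})))"
    using uv2(3) D1eq uX du vnX by auto
  have X'eq: "X' = insert v1 (insert v2 (insert v3 (X - {u1,u2,u3})))"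
    using uv3(3) D2eq uX du vnX by auto
  have IR1: "IR_set V adj (insert v1 (insert u2 (insert u3 (X - {u1,u2,u3}))))"
    using D(1) D1eq unfolding IR_graph_V_def by simp
  have IR2: "IR_set V adj (insert v1 (insert v2 (insert u3 (X - {u1,u2,u3}))))"
    using D(2) D2eq unfolding IR_graph_V_def by simp
  have IR3: "IR_set V adj (insert v1 (insert v2 (insert v3 (X - {u1,u2,u3}))))"
    using X'HV X'eq unfolding IR_graph_V_def by simp
  show ?thesis
    using core[OF G IRX uX du iso pa pb pc IR1 IR2 IR3] X'eq by simp
qed

end
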